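(* Let $(S,\mathit{Act},P,\mu)$ be an MDP with a bounded measurable reward $r$ (specified below), let $\pi$ be any stationary policy, and let $\gamma\in(0,1)$. Let $I\subseteq S$ be measurable and let $A,B\subseteq S$ be measurable. Write $U:=B\cup \mathrm{Abs}_\pi\big((A\cup B)^c\big)$ (assumed measurable). Assume: 1. (Invariant) $I$ is absorbing under $\pi$ and $\mu(I)=1$. 2. (Almost-sure reachability) For all $s\in I$, $\Pr_\pi(\tau_U<\infty\mid S_0=s)=1$. 3. (Uniform bound on hitting time) There is a constant $\bar H<\infty$ such that for all $s\in (A\setminus B)\cap I$, $\mathbb{E}_\pi[\tau_U\mid S_0=s]\le \bar H$. 4. (Reward) $r(s,a,s')=\mathbf 1_{\{s\in U\}}$ for all $s,a,s'$. Then the function $W:I\to\mathbb{R}$, $W(s):=C-V^\pi(s)$ with $C:=\frac{1}{1-\gamma}$, is a Streett supermartingale for $(A,B)$ under $\pi$ with supporting invariant $I$.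
   Context: State space $S$ and action space $\mathit{Act}$ are each finite or countable (discrete $\sigma$-algebra) or Borel subsets of a Euclidean space (Borel $\sigma$-algebra). An MDP $(S,\mathit{Act},P,\mu)$ consists of a stochastic kernel $P(\cdot\mid s,a)$ on $S$ given $S\times\mathit{Act}$ and an initial distribution $\mu$ on $S$. A stationary policy $\pi$ is a stochastic kernel $\pi(\cdot\mid s)$ on $\mathit{Act}$ given $S$. For $s\in S$, $\Pr_\pi(\cdot\mid S_0=s)$ and $\mathbb{E}_\pi[\cdot\mid S_0=s]$ denote probability and expectation for the process $(S_t,A_t)_{t\ge0}$ with $S_0=s$, $A_t\sim\pi(\cdot\mid S_t)$, $S_{t+1}\sim P(\cdot\mid S_t,A_t)$. Given a measurable reward $r:S\times\mathit{Act}\times S\to\mathbb{R}$ and $\gamma\in(0,1)$, the value function is $V^\pi(s)=\mathbb{E}_\pi\big[\sum_{t\ge0}\gamma^t r(S_t,A_t,S_{t+1})\mid S_0=s\big]$. A measurable set $X\subseteq S$ is absorbing under $\pi$ if $\Pr_\pi(S_1\in X\mid S_0=s)=1$ for all $s\in X$. For measurable $X$, $\mathrm{Abs}_\pi(X):=\{s\in S:\Pr_\pi(\forall t\ge0:\ S_t\in X\mid S_0=s)=1\}$ (largest absorbing subset). The first hitting time of a measurable $U$ is $\tau_U:=\inf\{t\ge0:S_t\in U\}$ (with $\inf\emptyset=\infty$). Streett supermartingale: given measurable $A,B,I\subseteq S$, a function $W:I\to[0,\infty)$ is a Streett supermartingale for $(A,B)$ under $\pi$ with supporting invariant $I$ if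 (i) $\mu(I)=1$; (ii) $\Pr_\pi(S_1\in I\mid S_0=s)=1$ for all $s\in I$; (iii) there is a constant $\varepsilon>0$ with $\mathbb{E}_\pi[W(S_1)\mid S_0=s]\le W(s)-\varepsilon$ for all $s\in (A\setminus B)\cap I$; (iv) $\mathbb{E}_\pi[W(S_1)\mid S_0=s]\le W(s)$ for all $s\in I\setminus(A\cup B)$. *)

theory Defs
  imports "HOL-Probability.Probability"
begin

text \<open>State space S and action space Act are Borel subsets of Euclidean spaces, carrying the
  restricted Borel sigma-algebra (this also covers the countable/discrete case up to isomorphism).\<close>

definition sspace :: "'s::euclidean_space set \<Rightarrow> 's measure" where
  "sspace S = restrict_space borel S"

definition path_space :: "'s::euclidean_space set \<Rightarrow> 'c::euclidean_space set \<Rightarrow> ('s \<times> 'c) stream measure" where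
  "path_space S Act = stream_space (sspace S \<Otimes>\<^sub>M sspace Act)"

definition St :: "nat \<Rightarrow> ('s \<times> 'c) stream \<Rightarrow> 's" where
  "St t \<omega> = fst (\<omega> !! t)"

definition At :: "nat \<Rightarrow> ('s \<times> 'c) stream \<Rightarrow> 'c" where
  "At t \<omega> = snd (\<omega> !! t)"

text \<open>T s is the law of the process (S_t,A_t) started at S_0 = s, with A_t drawn from pi(.|S_t)
  and S_(t+1) drawn from P(.|S_t,A_t). It is characterised (uniquely, by Ionescu-Tulcea) as the
  measurable kernel satisfying the one-step unfolding equation below.\<close>

definition is_traj_kernel ::
  "'s::euclidean_space set \<Rightarrow> 'c::euclidean_space set \<Rightarrow> ('s \<times> 'c \<Rightarrow> 's measure)
    \<Rightarrow> ('s \<Rightarrow> 'c measure) \<Rightarrow> ('s \<Rightarrow> ('s \<times> 'c) stream measure) \<Rightarrow> bool" where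
  "is_traj_kernel S Act P \<pi> T \<longleftrightarrow>
     T \<in> sspace S \<rightarrow>\<^sub>M prob_algebra (path_space S Act) \<and>
     (\<forall>s\<in>S. T s = \<pi> s \<bind> (\<lambda>a. P (s, a) \<bind>
                     (\<lambda>s'. distr (T s') (path_space S Act) (\<lambda>\<omega>. (s, a) ## \<omega>))))"

definition Prob :: "('s \<Rightarrow> ('s \<times> 'c) stream measure) \<Rightarrow> 's \<Rightarrow> (('s \<times> 'c) stream \<Rightarrow> bool) \<Rightarrow> real" where
  "Prob T s E = measure (T s) {\<omega> \<in> space (T s). E \<omega>}"

definition value_fun :: "('s \<Rightarrow> ('s \<times> 'c) stream measure) \<Rightarrow> real \<Rightarrow> ('s \<Rightarrow> 'c \<Rightarrow> 's \<Rightarrow> real) \<Rightarrow> 's \<Rightarrow> real" where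
  "value_fun T \<gamma> r s = (\<integral>\<omega>. (\<Sum>t. \<gamma> ^ t * r (St t \<omega>) (At t \<omega>) (St (Suc t) \<omega>)) \<partial>T s)"

definition absorbing :: "('s \<Rightarrow> ('s \<times> 'c) stream measure) \<Rightarrow> 's set \<Rightarrow> bool" where
  "absorbing T X \<longleftrightarrow> (\<forall>s\<in>X. Prob T s (\<lambda>\<omega>. St 1 \<omega> \<in> X) = 1)"

definition Abs :: "'s set \<Rightarrow> ('s \<Rightarrow> ('s \<times> 'c) stream measure) \<Rightarrow> 's set \<Rightarrow> 's set" where
  "Abs S T X = {s \<in> S. Prob T s (\<lambda>\<omega>. \<forall>t. St t \<omega> \<in> X) = 1}"

definition hit_time :: "'s set \<Rightarrow> ('s \<times> 'c) stream \<Rightarrow> enat" where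
  "hit_time U \<omega> = (if \<exists>t. St t \<omega> \<in> U then enat (LEAST t. St t \<omega> \<in> U) else \<infinity>)"

text \<open>Streett supermartingale W : I -> [0,oo) for (A,B) under pi with supporting invariant I.
  Expectations of the nonnegative quantity W(S_1) are taken as nonnegative integrals;
  condition (iii) E[W(S_1)] <= W(s) - eps is written as E[W(S_1)] + eps <= W(s).\<close>
definition streett_supermartingale ::
  "'s measure \<Rightarrow> ('s \<Rightarrow> ('s \<times> 'c) stream measure) \<Rightarrow> 's set \<Rightarrow> 's set \<Rightarrow> 's set \<Rightarrow> ('s \<Rightarrow> real) \<Rightarrow> bool" where
  "streett_supermartingale \<mu> T A B I W \<longleftrightarrow>
     (\<forall>s\<in>I. 0 \<le> W s) \<and>
     measure \<mu> I = 1 \<and>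
     (\<forall>s\<in>I. Prob T s (\<lambda>\<omega>. St 1 \<omega> \<in> I) = 1) \<and>
     (\<exists>\<epsilon>>0. \<forall>s\<in>(A - B) \<inter> I.
        (\<integral>\<^sup>+\<omega>. ennreal (W (St 1 \<omega>)) \<partial>T s) + ennreal \<epsilon> \<le> ennreal (W s)) \<and>
     (\<forall>s\<in>I - (A \<union> B). (\<integral>\<^sup>+\<omega>. ennreal (W (St 1 \<omega>)) \<partial>T s) \<le> ennreal (W s))"

end

theory Submission
  imports Defs
begin



locale mdp =
  fixes S :: "'s::euclidean_space set" and Act :: "'c::euclidean_space set"
    and P :: "'s \<times> 'c \<Rightarrow> 's measure"
    and \<pi> :: "'s \<Rightarrow> 'c measure" and T :: "'s \<Rightarrow> ('s \<times> 'c) stream measure"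
  assumes P_kernel: "P \<in> sspace S \<Otimes>\<^sub>M sspace Act \<rightarrow>\<^sub>M prob_algebra (sspace S)"
    and pi_kernel: "\<pi> \<in> sspace S \<rightarrow>\<^sub>M prob_algebra (sspace Act)"
    and traj: "is_traj_kernel S Act P \<pi> T"
begin

abbreviation "M \<equiv> path_space S Act"

lemma space_sspace[simp]: "space (sspace X) = X"
  by (simp add: sspace_def space_restrict_space)

lemma T_meas: "T \<in> sspace S \<rightarrow>\<^sub>M prob_algebra M"
  using traj by (simp add: is_traj_kernel_def)

lemma T_sub[measurable]: "T \<in> sspace S \<rightarrow>\<^sub>M subprob_algebra M"
  using T_meas by (rule measurable_prob_algebraD)

lemma P_sub[measurable]: "P \<in> sspace S \<Otimes>\<^sub>M sspace Act \<rightarrow>\<^sub>M subprob_algebra (sspace S)"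
  using P_kernel by (rule measurable_prob_algebraD)

lemma pi_sub[measurable]: "\<pi> \<in> sspace S \<rightarrow>\<^sub>M subprob_algebra (sspace Act)"
  using pi_kernel by (rule measurable_prob_algebraD)

lemma T_unfold: "s \<in> S \<Longrightarrow> T s = \<pi> s \<bind> (\<lambda>a. P (s, a) \<bind>
                     (\<lambda>s'. distr (T s') M (\<lambda>\<omega>. (s, a) ## \<omega>)))"
  using traj by (simp add: is_traj_kernel_def)

lemma T_prob: "s \<in> S \<Longrightarrow> prob_space (T s)"
  using measurable_space[OF T_meas, of s] by (simp add: space_prob_algebra)

lemma sets_T[measurable_cong]: "s \<in> S \<Longrightarrow> sets (T s) = sets M"
  using measurable_space[OF T_meas, of s] by (simp add: space_prob_algebra)

lemma space_T: "s \<in> S \<Longrightarrow> space (T s) = space M"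
  using sets_T by (rule sets_eq_imp_space_eq)

lemma P_prob: "s \<in> S \<Longrightarrow> a \<in> Act \<Longrightarrow> prob_space (P (s, a))"
  using measurable_space[OF P_kernel, of "(s,a)"] by (simp add: space_prob_algebra space_pair_measure)

lemma sets_P[measurable_cong]: "s \<in> S \<Longrightarrow> a \<in> Act \<Longrightarrow> sets (P (s, a)) = sets (sspace S)"
  using measurable_space[OF P_kernel, of "(s,a)"] by (simp add: space_prob_algebra space_pair_measure)

lemma space_P: "s \<in> S \<Longrightarrow> a \<in> Act \<Longrightarrow> space (P (s, a)) = S"
  using sets_P[THEN sets_eq_imp_space_eq] by simp

lemma pi_prob: "s \<in> S \<Longrightarrow> prob_space (\<pi> s)"
  using measurable_space[OF pi_kernel, of s] by (simp add: space_prob_algebra)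

lemma sets_pi[measurable_cong]: "s \<in> S \<Longrightarrow> sets (\<pi> s) = sets (sspace Act)"
  using measurable_space[OF pi_kernel, of s] by (simp add: space_prob_algebra)

lemma space_pi: "s \<in> S \<Longrightarrow> space (\<pi> s) = Act"
  using sets_pi[THEN sets_eq_imp_space_eq] by simp

lemma space_M: "space M = streams (S \<times> Act)"
  by (simp add: path_space_def space_stream_space space_pair_measure)

lemma St_in: "\<omega> \<in> space M \<Longrightarrow> St t \<omega> \<in> S"
  unfolding space_M St_def using snth_in[of \<omega> "S \<times> Act" t] by auto

lemma At_in: "\<omega> \<in> space M \<Longrightarrow> At t \<omega> \<in> Act"
  unfolding space_M At_def using snth_in[of \<omega> "S \<times> Act" t] by auto

lemma St_meas[measurable]: "St t \<in> M \<rightarrow>\<^sub>M sspace S"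
  unfolding St_def path_space_def by measurable

lemma At_meas[measurable]: "At t \<in> M \<rightarrow>\<^sub>M sspace Act"
  unfolding At_def path_space_def by measurable

lemma cons_meas:
  assumes "s \<in> S" "a \<in> Act"
  shows "(\<lambda>\<omega>. (s, a) ## \<omega>) \<in> M \<rightarrow>\<^sub>M M"
  unfolding path_space_def
  by (rule measurable_Stream) (auto intro!: measurable_const simp: space_pair_measure assms)

lemma inner_kernel:
  assumes "s \<in> S" "a \<in> Act"
  shows "(\<lambda>s'. distr (T s') M (\<lambda>\<omega>. (s, a) ## \<omega>)) \<in> sspace S \<rightarrow>\<^sub>M subprob_algebra M"
proof (rule measurable_distr2[where M=M])
  show "(\<lambda>(x, y). (s, a) ## y) \<in> sspace S \<Otimes>\<^sub>M M \<rightarrow>\<^sub>M M"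
    using cons_meas[OF assms] by measurable
qed (rule T_sub)

lemma outer_kernel:
  assumes "s \<in> S"
  shows "(\<lambda>a. P (s, a) \<bind> (\<lambda>s'. distr (T s') M (\<lambda>\<omega>. (s, a) ## \<omega>))) \<in> sspace Act \<rightarrow>\<^sub>M subprob_algebra M"
proof (rule measurable_bind[where N="sspace S"])
  show "(\<lambda>a. P (s, a)) \<in> sspace Act \<rightarrow>\<^sub>M subprob_algebra (sspace S)"
    using assms by (intro measurable_compose[OF _ P_sub] measurable_Pair measurable_const measurable_ident_sets) auto
  show "(\<lambda>x. distr (T (snd x)) M (\<lambda>\<omega>. (s, fst x) ## \<omega>)) \<in> sspace Act \<Otimes>\<^sub>M sspace S \<rightarrow>\<^sub>M subprob_algebra M"
  proof (rule measurable_distr2[where M=M])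
    show "(\<lambda>(x, y). (s, fst x) ## y) \<in> (sspace Act \<Otimes>\<^sub>M sspace S) \<Otimes>\<^sub>M M \<rightarrow>\<^sub>M M"
    proof -
      have e: "(\<lambda>(x, y). (s, fst x) ## y) = (\<lambda>p. (s, fst (fst p)) ## snd p)" by auto
      show ?thesis unfolding e path_space_def
        apply (rule measurable_Stream)
        using assms apply (auto simp: space_pair_measure intro!: measurable_Pair measurable_const)
        done
    qed
  qed measurable
qed

lemma AE_markov:
  assumes s: "s \<in> S" and Phi[measurable]: "Measurable.pred M \<Phi>"
  shows "(AE \<omega> in T s. \<Phi> \<omega>) \<longleftrightarrow>
    (AE a in \<pi> s. AE s' in P (s, a). AE \<omega> in T s'. \<Phi> ((s, a) ## \<omega>))"
proof -
  have ok: "(\<lambda>a. P (s, a) \<bind> (\<lambda>s'. distr (T s') M (\<lambda>\<omega>. (s, a) ## \<omega>))) \<in> \<pi> s \<rightarrow>\<^sub>M subprob_algebra M"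
    using outer_kernel[OF s] by (simp cong: measurable_cong_sets add: sets_pi[OF s])
  have "(AE \<omega> in T s. \<Phi> \<omega>) \<longleftrightarrow> (AE a in \<pi> s. AE y in P (s, a) \<bind> (\<lambda>s'. distr (T s') M (\<lambda>\<omega>. (s, a) ## \<omega>)). \<Phi> y)"
    unfolding T_unfold[OF s] by (rule AE_bind[OF ok Phi])
  also have "\<dots> \<longleftrightarrow> (AE a in \<pi> s. AE s' in P (s, a). AE \<omega> in T s'. \<Phi> ((s, a) ## \<omega>))"
  proof (rule AE_cong)
    fix a assume "a \<in> space (\<pi> s)"
    then have a: "a \<in> Act" using space_pi[OF s] by simp
    have ik: "(\<lambda>s'. distr (T s') M (\<lambda>\<omega>. (s, a) ## \<omega>)) \<in> P (s, a) \<rightarrow>\<^sub>M subprob_algebra M"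
      using inner_kernel[OF s a] by (simp cong: measurable_cong_sets add: sets_P[OF s a])
    have "(AE y in P (s, a) \<bind> (\<lambda>s'. distr (T s') M (\<lambda>\<omega>. (s, a) ## \<omega>)). \<Phi> y) \<longleftrightarrow>
       (AE s' in P (s, a). AE y in distr (T s') M (\<lambda>\<omega>. (s, a) ## \<omega>). \<Phi> y)"
      by (rule AE_bind[OF ik Phi])
    also have "\<dots> \<longleftrightarrow> (AE s' in P (s, a). AE \<omega> in T s'. \<Phi> ((s, a) ## \<omega>))"
    proof (rule AE_cong)
      fix s' assume "s' \<in> space (P (s, a))"
      then have s': "s' \<in> S" using space_P[OF s a] by simp
      have cm: "(\<lambda>\<omega>. (s, a) ## \<omega>) \<in> T s' \<rightarrow>\<^sub>M M"
        using cons_meas[OF s a] by (simp cong: measurable_cong_sets add: sets_T[OF s'])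
      show "(AE y in distr (T s') M (\<lambda>\<omega>. (s, a) ## \<omega>). \<Phi> y) \<longleftrightarrow> (AE \<omega> in T s'. \<Phi> ((s, a) ## \<omega>))"
        by (rule AE_distr_iff[OF cm]) measurable
    qed
    finally show "(AE y in P (s, a) \<bind> (\<lambda>s'. distr (T s') M (\<lambda>\<omega>. (s, a) ## \<omega>)). \<Phi> y) \<longleftrightarrow>
       (AE s' in P (s, a). AE \<omega> in T s'. \<Phi> ((s, a) ## \<omega>))" .
  qed
  finally show ?thesis .
qed

lemma nn_markov:
  assumes s: "s \<in> S" and F[measurable]: "F \<in> borel_measurable M"
  shows "(\<integral>\<^sup>+\<omega>. F \<omega> \<partial>T s) =
    (\<integral>\<^sup>+a. \<integral>\<^sup>+s'. \<integral>\<^sup>+\<omega>. F ((s, a) ## \<omega>) \<partial>T s' \<partial>P (s, a) \<partial>\<pi> s)"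
proof -
  have ok: "(\<lambda>a. P (s, a) \<bind> (\<lambda>s'. distr (T s') M (\<lambda>\<omega>. (s, a) ## \<omega>))) \<in> \<pi> s \<rightarrow>\<^sub>M subprob_algebra M"
    using outer_kernel[OF s] by (simp cong: measurable_cong_sets add: sets_pi[OF s])
  have "(\<integral>\<^sup>+\<omega>. F \<omega> \<partial>T s) = (\<integral>\<^sup>+a. \<integral>\<^sup>+y. F y \<partial>(P (s, a) \<bind> (\<lambda>s'. distr (T s') M (\<lambda>\<omega>. (s, a) ## \<omega>))) \<partial>\<pi> s)"
    unfolding T_unfold[OF s] by (rule nn_integral_bind[OF F ok])
  also have "\<dots> = (\<integral>\<^sup>+a. \<integral>\<^sup>+s'. \<integral>\<^sup>+\<omega>. F ((s, a) ## \<omega>) \<partial>T s' \<partial>P (s, a) \<partial>\<pi> s)"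
  proof (rule nn_integral_cong)
    fix a assume "a \<in> space (\<pi> s)"
    then have a: "a \<in> Act" using space_pi[OF s] by simp
    have ik: "(\<lambda>s'. distr (T s') M (\<lambda>\<omega>. (s, a) ## \<omega>)) \<in> P (s, a) \<rightarrow>\<^sub>M subprob_algebra M"
      using inner_kernel[OF s a] by (simp cong: measurable_cong_sets add: sets_P[OF s a])
    have "(\<integral>\<^sup>+y. F y \<partial>(P (s, a) \<bind> (\<lambda>s'. distr (T s') M (\<lambda>\<omega>. (s, a) ## \<omega>)))) =
       (\<integral>\<^sup>+s'. \<integral>\<^sup>+y. F y \<partial>distr (T s') M (\<lambda>\<omega>. (s, a) ## \<omega>) \<partial>P (s, a))"
      by (rule nn_integral_bind[OF F ik])
    also have "\<dots> = (\<integral>\<^sup>+s'. \<integral>\<^sup>+\<omega>. F ((s, a) ## \<omega>) \<partial>T s' \<partial>P (s, a))"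
    proof (rule nn_integral_cong)
      fix s' assume "s' \<in> space (P (s, a))"
      then have s': "s' \<in> S" using space_P[OF s a] by simp
      have cm: "(\<lambda>\<omega>. (s, a) ## \<omega>) \<in> T s' \<rightarrow>\<^sub>M M"
        using cons_meas[OF s a] by (simp cong: measurable_cong_sets add: sets_T[OF s'])
      show "(\<integral>\<^sup>+y. F y \<partial>distr (T s') M (\<lambda>\<omega>. (s, a) ## \<omega>)) = (\<integral>\<^sup>+\<omega>. F ((s, a) ## \<omega>) \<partial>T s')"
        by (rule nn_integral_distr[OF cm]) simp
    qed
    finally show "(\<integral>\<^sup>+y. F y \<partial>(P (s, a) \<bind> (\<lambda>s'. distr (T s') M (\<lambda>\<omega>. (s, a) ## \<omega>)))) =
       (\<integral>\<^sup>+s'. \<integral>\<^sup>+\<omega>. F ((s, a) ## \<omega>) \<partial>T s' \<partial>P (s, a))" .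
  qed
  finally show ?thesis .
qed

lemma St_cons_0[simp]: "St 0 ((s, a) ## \<omega>) = s"
  by (simp add: St_def)

lemma St_cons_Suc[simp]: "St (Suc t) ((s, a) ## \<omega>) = St t \<omega>"
  by (simp add: St_def)

lemma St_stl: "St t (stl \<omega>) = St (Suc t) \<omega>"
  by (simp add: St_def)

lemma AE_St0:
  assumes s: "s \<in> S"
  shows "AE \<omega> in T s. St 0 \<omega> = s"
proof -
  have [measurable]: "Measurable.pred M (\<lambda>\<omega>. St 0 \<omega> = s)"
  proof -
    have "{s} \<in> sets (sspace S)" using s
      by (auto simp: sspace_def sets_restrict_space image_iff intro!: bexI[of _ "{s}"])
    then have "St 0 -` {s} \<inter> space M \<in> sets M"
      by (rule measurable_sets[OF St_meas])
    moreover have "St 0 -` {s} \<inter> space M = {\<omega> \<in> space M. St 0 \<omega> = s}" by auto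
    ultimately show ?thesis by (simp add: pred_def)
  qed
  show ?thesis
    by (subst AE_markov[OF s]) (auto intro!: AE_I2)
qed

lemma AE_mono_sp: "AE x in N. Q1 x \<Longrightarrow> (\<And>x. x \<in> space N \<Longrightarrow> Q1 x \<Longrightarrow> Q2 x) \<Longrightarrow> AE x in N. Q2 x"
  by (erule AE_mp) (auto intro!: AE_I2)

lemma nn_shift:
  assumes s: "s \<in> S" and h[measurable]: "h \<in> borel_measurable M"
    and G[measurable]: "G \<in> borel_measurable (sspace S)"
    and GT: "\<And>s'. s' \<in> S \<Longrightarrow> G s' = (\<integral>\<^sup>+\<omega>. h \<omega> \<partial>T s')"
  shows "(\<integral>\<^sup>+\<omega>. h (stl \<omega>) \<partial>T s) = (\<integral>\<^sup>+\<omega>. G (St 1 \<omega>) \<partial>T s)"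
proof -
  have "(\<integral>\<^sup>+\<omega>. h (stl \<omega>) \<partial>T s) = (\<integral>\<^sup>+a. \<integral>\<^sup>+s'. \<integral>\<^sup>+\<omega>. h \<omega> \<partial>T s' \<partial>P (s, a) \<partial>\<pi> s)"
  proof -
    have hm: "(\<lambda>\<omega>. h (stl \<omega>)) \<in> borel_measurable M"
      using measurable_compose[OF measurable_stl h[unfolded path_space_def]] by (simp add: path_space_def)
    show ?thesis by (subst nn_markov[OF s hm]) simp
  qed
  also have "\<dots> = (\<integral>\<^sup>+a. \<integral>\<^sup>+s'. \<integral>\<^sup>+\<omega>. G (St 0 \<omega>) \<partial>T s' \<partial>P (s, a) \<partial>\<pi> s)"
  proof (rule nn_integral_cong, rule nn_integral_cong)
    fix a s' assume a: "a \<in> space (\<pi> s)" and s': "s' \<in> space (P (s, a))"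
    then have a: "a \<in> Act" using space_pi[OF s] by simp
    then have s': "s' \<in> S" using s' space_P[OF s a] by simp
    interpret prob_space "T s'" by (rule T_prob[OF s'])
    have "(\<integral>\<^sup>+\<omega>. G (St 0 \<omega>) \<partial>T s') = (\<integral>\<^sup>+\<omega>. G s' \<partial>T s')"
      by (rule nn_integral_cong_AE) (use AE_St0[OF s'] in auto)
    also have "\<dots> = G s'" by (simp add: emeasure_space_1)
    finally show "(\<integral>\<^sup>+\<omega>. h \<omega> \<partial>T s') = (\<integral>\<^sup>+\<omega>. G (St 0 \<omega>) \<partial>T s')"
      using GT[OF s'] by simp
  qed
  also have "\<dots> = (\<integral>\<^sup>+\<omega>. G (St 1 \<omega>) \<partial>T s)"
    by (subst nn_markov[OF s]) simp_all
  finally show ?thesis .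
qed

lemma Abs_iff:
  assumes X[measurable]: "X \<in> sets (sspace S)" and s: "s \<in> S"
  shows "s \<in> Abs S T X \<longleftrightarrow> (AE \<omega> in T s. \<forall>t. St t \<omega> \<in> X)"
proof -
  interpret prob_space "T s" by (rule T_prob[OF s])
  have ev: "{\<omega> \<in> space (T s). \<forall>t. St t \<omega> \<in> X} \<in> sets (T s)"
    unfolding sets_T[OF s] space_T[OF s] by measurable
  show ?thesis
    unfolding Abs_def Prob_def using s prob_eq_1[OF ev]
    by (auto simp: eventually_ae_filter)
qed

lemma Abs_sub:
  assumes X[measurable]: "X \<in> sets (sspace S)" and s: "s \<in> Abs S T X"
  shows "s \<in> X"
proof -
  have sS: "s \<in> S" using s by (simp add: Abs_def)
  interpret prob_space "T s" by (rule T_prob[OF sS])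
  have "AE \<omega> in T s. \<forall>t. St t \<omega> \<in> X" using Abs_iff[OF X sS] s by simp
  moreover note AE_St0[OF sS]
  ultimately have "AE \<omega> in T s. s \<in> X" by eventually_elim auto
  then show ?thesis by simp
qed

lemma Abs_closed:
  assumes X[measurable]: "X \<in> sets (sspace S)" and AX[measurable]: "Abs S T X \<in> sets (sspace S)"
  shows "s \<in> Abs S T X \<Longrightarrow> AE \<omega> in T s. St t \<omega> \<in> Abs S T X"
proof (induction t arbitrary: s)
  case 0
  have sS: "s \<in> S" using 0 by (simp add: Abs_def)
  show ?case using AE_St0[OF sS] by eventually_elim (use 0 in simp)
next
  case (Suc t)
  have sS: "s \<in> S" using Suc.prems by (simp add: Abs_def)
  have "AE \<omega> in T s. \<forall>t. St t \<omega> \<in> X" using Abs_iff[OF X sS] Suc.prems by simp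
  then have "AE a in \<pi> s. AE s' in P (s, a). AE \<omega> in T s'. \<forall>t. St t ((s, a) ## \<omega>) \<in> X"
    by (subst (asm) AE_markov[OF sS]) simp_all
  then have 1: "AE a in \<pi> s. AE s' in P (s, a). s' \<in> Abs S T X"
  proof (rule AE_mono_sp)
    fix a assume a: "a \<in> space (\<pi> s)"
      and H1: "AE s' in P (s, a). AE \<omega> in T s'. \<forall>t. St t ((s, a) ## \<omega>) \<in> X"
    then have a: "a \<in> Act" using space_pi[OF sS] by simp
    show "AE s' in P (s, a). s' \<in> Abs S T X"
      using H1
    proof (rule AE_mono_sp)
      fix s' assume s': "s' \<in> space (P (s, a))"
        and H: "AE \<omega> in T s'. \<forall>t. St t ((s, a) ## \<omega>) \<in> X"
      then have s': "s' \<in> S" using s' space_P[OF sS a] by simp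
      have "AE \<omega> in T s'. \<forall>t. St t \<omega> \<in> X"
        using H by eventually_elim (metis St_cons_Suc)
      then show "s' \<in> Abs S T X" using Abs_iff[OF X s'] by simp
    qed
  qed
  show ?case
  proof (subst AE_markov[OF sS])
    show "Measurable.pred M (\<lambda>\<omega>. St (Suc t) \<omega> \<in> Abs S T X)" by measurable
    show "AE a in \<pi> s. AE s' in P (s, a). AE \<omega> in T s'. St (Suc t) ((s, a) ## \<omega>) \<in> Abs S T X"
      using 1
    proof (rule AE_mono_sp)
      fix a assume "AE s' in P (s, a). s' \<in> Abs S T X"
      then show "AE s' in P (s, a). AE \<omega> in T s'. St (Suc t) ((s, a) ## \<omega>) \<in> Abs S T X"
        by (rule AE_mono_sp) (use Suc.IH in simp)
    qed
  qed
qed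

end



lemma geo_summable:
  fixes \<gamma> :: real and x :: "nat \<Rightarrow> real"
  assumes "0 < \<gamma>" "\<gamma> < 1" "\<And>t. 0 \<le> x t" "\<And>t. x t \<le> 1"
  shows "summable (\<lambda>t. \<gamma> ^ t * x t)"
  by (rule summable_comparison_test'[OF summable_geometric[of \<gamma>]])
     (use assms in \<open>auto intro!: mult_left_le[where c="\<gamma>^_" for n, simplified] mult_nonneg_nonneg\<close>)

lemma geo_bounds:
  fixes \<gamma> :: real and x :: "nat \<Rightarrow> real"
  assumes "0 < \<gamma>" "\<gamma> < 1" "\<And>t. 0 \<le> x t" "\<And>t. x t \<le> 1"
  shows "0 \<le> (\<Sum>t. \<gamma> ^ t * x t)" "(\<Sum>t. \<gamma> ^ t * x t) \<le> 1 / (1 - \<gamma>)"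
proof -
  have sm: "summable (\<lambda>t. \<gamma> ^ t * x t)" by (rule geo_summable[OF assms])
  show "0 \<le> (\<Sum>t. \<gamma> ^ t * x t)" by (rule suminf_nonneg[OF sm]) (use assms in simp)
  have "(\<Sum>t. \<gamma> ^ t * x t) \<le> (\<Sum>t. \<gamma> ^ t)"
    by (rule suminf_le[OF _ sm summable_geometric]) (use assms in \<open>auto intro: mult_left_le\<close>)
  also have "\<dots> = 1 / (1 - \<gamma>)" using suminf_geometric[of \<gamma>] assms by simp
  finally show "(\<Sum>t. \<gamma> ^ t * x t) \<le> 1 / (1 - \<gamma>)" .
qed

lemma geo_head:
  fixes \<gamma> :: real and x :: "nat \<Rightarrow> real"
  assumes "0 < \<gamma>" "\<gamma> < 1" "\<And>t. 0 \<le> x t" "\<And>t. x t \<le> 1"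
  shows "(\<Sum>t. \<gamma> ^ t * x t) = x 0 + \<gamma> * (\<Sum>t. \<gamma> ^ t * x (Suc t))"
proof -
  have sm: "summable (\<lambda>t. \<gamma> ^ t * x t)" by (rule geo_summable[OF assms])
  have sm2: "summable (\<lambda>t. \<gamma> ^ t * x (Suc t))" by (rule geo_summable) (use assms in auto)
  have "(\<Sum>t. \<gamma> ^ Suc t * x (Suc t)) = (\<Sum>t. \<gamma> ^ t * x t) - x 0"
    using suminf_split_head[OF sm] by simp
  moreover have "(\<Sum>t. \<gamma> ^ Suc t * x (Suc t)) = \<gamma> * (\<Sum>t. \<gamma> ^ t * x (Suc t))"
    using suminf_mult[OF sm2, of \<gamma>] by (simp add: mult.assoc)
  ultimately show ?thesis by simp
qed

lemma geo_term:
  fixes \<gamma> :: real and x :: "nat \<Rightarrow> real"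
  assumes "0 < \<gamma>" "\<gamma> < 1" "\<And>t. 0 \<le> x t" "\<And>t. x t \<le> 1" "x n = 1"
  shows "\<gamma> ^ n \<le> (\<Sum>t. \<gamma> ^ t * x t)"
proof -
  have sm: "summable (\<lambda>t. \<gamma> ^ t * x t)" by (rule geo_summable) (use assms in auto)
  have "sum (\<lambda>t. \<gamma> ^ t * x t) {n} \<le> (\<Sum>t. \<gamma> ^ t * x t)"
    by (rule sum_le_suminf[OF sm]) (use assms in auto)
  then show ?thesis using assms by simp
qed

lemma geo_all:
  fixes \<gamma> :: real and x :: "nat \<Rightarrow> real"
  assumes "0 < \<gamma>" "\<gamma> < 1" "\<And>t. x t = 1"
  shows "(\<Sum>t. \<gamma> ^ t * x t) = 1 / (1 - \<gamma>)"
  using suminf_geometric[of \<gamma>] assms by simp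




locale mdpU = mdp S Act P \<pi> T
  for S :: "'s::euclidean_space set" and Act :: "'c::euclidean_space set"
    and P :: "'s \<times> 'c \<Rightarrow> 's measure"
    and \<pi> :: "'s \<Rightarrow> 'c measure" and T :: "'s \<Rightarrow> ('s \<times> 'c) stream measure" +
  fixes \<gamma> :: real and U :: "'s set"
  assumes g0: "0 < \<gamma>" and g1: "\<gamma> < 1" and U_meas[measurable]: "U \<in> sets (sspace S)"
begin

definition fv :: "('s \<times> 'c) stream \<Rightarrow> real" where
  "fv \<omega> = (\<Sum>t. \<gamma> ^ t * indicator U (St t \<omega>))"

definition Wr :: "'s \<Rightarrow> real" where
  "Wr s = (\<integral>\<omega>. 1 / (1 - \<gamma>) - fv \<omega> \<partial>T s)"

lemma fv_bounds: "0 \<le> fv \<omega>" "fv \<omega> \<le> 1 / (1 - \<gamma>)"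
  unfolding fv_def by (rule geo_bounds[OF g0 g1]; simp add: indicator_def)+

lemma fv_meas[measurable]: "fv \<in> borel_measurable M"
  unfolding fv_def by measurable

lemma fv_head: "fv \<omega> = indicator U (St 0 \<omega>) + \<gamma> * fv (stl \<omega>)"
  unfolding fv_def St_stl
  by (rule geo_head[OF g0 g1]) (simp_all add: indicator_def)

lemma integrable_g: "s \<in> S \<Longrightarrow> integrable (T s) (\<lambda>\<omega>. 1 / (1 - \<gamma>) - fv \<omega>)"
proof -
  assume s: "s \<in> S"
  interpret prob_space "T s" by (rule T_prob[OF s])
  show ?thesis
    by (rule integrable_const_bound[where B="1 / (1 - \<gamma>)"])
       (use fv_bounds in \<open>auto simp: measurable_cong_sets[OF sets_T[OF s] refl]\<close>)
qed

lemma Wr_bounds: assumes s: "s \<in> S" shows "0 \<le> Wr s" "Wr s \<le> 1 / (1 - \<gamma>)"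
proof -
  interpret prob_space "T s" by (rule T_prob[OF s])
  show "0 \<le> Wr s" unfolding Wr_def
    by (rule integral_nonneg_AE) (use fv_bounds in auto)
  have "Wr s \<le> (\<integral>\<omega>. 1 / (1 - \<gamma>) \<partial>T s)" unfolding Wr_def
    by (rule integral_mono[OF integrable_g[OF s]]) (use fv_bounds in auto)
  then show "Wr s \<le> 1 / (1 - \<gamma>)" by (simp add: prob_space)
qed

lemma Wr_nn: assumes s: "s \<in> S"
  shows "ennreal (Wr s) = (\<integral>\<^sup>+\<omega>. ennreal (1 / (1 - \<gamma>) - fv \<omega>) \<partial>T s)"
  unfolding Wr_def
  by (rule nn_integral_eq_integral[symmetric, OF integrable_g[OF s]]) (use fv_bounds in auto)

lemma Wr_meas[measurable]: "Wr \<in> borel_measurable (sspace S)"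
proof -
  have "(\<lambda>N. integral\<^sup>L N (\<lambda>\<omega>. 1 / (1 - \<gamma>) - fv \<omega>)) \<in> subprob_algebra M \<rightarrow>\<^sub>M borel"
    by (rule integral_measurable_subprob_algebra) measurable
  from measurable_compose[OF T_sub this] show ?thesis unfolding Wr_def by simp
qed

lemma Wr_rec: assumes s: "s \<in> S"
  shows "ennreal (Wr s) = ennreal (1 - indicator U s) + ennreal \<gamma> * (\<integral>\<^sup>+\<omega>. ennreal (Wr (St 1 \<omega>)) \<partial>T s)"
proof -
  interpret prob_space "T s" by (rule T_prob[OF s])
  let ?K = "1 / (1 - \<gamma>)"
  have K: "?K = 1 + \<gamma> * ?K" using g0 g1 by (simp add: field_simps)
  have pw: "ennreal (?K - fv \<omega>) = ennreal (1 - indicator U (St 0 \<omega>)) + ennreal \<gamma> * ennreal (?K - fv (stl \<omega>))" for \<omega>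
  proof -
    have d: "\<gamma> * (?K - fv (stl \<omega>)) = \<gamma> * ?K - \<gamma> * fv (stl \<omega>)" by (simp add: right_diff_distrib)
    have e: "?K - fv \<omega> = (1 - indicator U (St 0 \<omega>)) + \<gamma> * (?K - fv (stl \<omega>))"
      using fv_head[of \<omega>] K d by linarith
    have "0 \<le> 1 - (indicator U (St 0 \<omega>) :: real)" by (simp add: indicator_def)
    moreover have "0 \<le> \<gamma> * (?K - fv (stl \<omega>))" using g0 fv_bounds[of "stl \<omega>"] by simp
    ultimately show ?thesis using g0 fv_bounds[of "stl \<omega>"]
      by (simp only: e ennreal_plus ennreal_mult)
  qed
  have m1: "(\<lambda>\<omega>. ennreal (1 - indicator U (St 0 \<omega>))) \<in> borel_measurable (T s)"
    by (simp add: measurable_cong_sets[OF sets_T[OF s] refl])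
  have m2: "(\<lambda>\<omega>. ennreal (?K - fv (stl \<omega>))) \<in> borel_measurable M"
    using measurable_compose[OF measurable_stl fv_meas[unfolded path_space_def]]
    by (simp add: path_space_def)
  have m2': "(\<lambda>\<omega>. ennreal \<gamma> * ennreal (?K - fv (stl \<omega>))) \<in> borel_measurable (T s)"
    using m2 by (simp add: measurable_cong_sets[OF sets_T[OF s] refl])
  have "ennreal (Wr s) = (\<integral>\<^sup>+\<omega>. ennreal (1 - indicator U (St 0 \<omega>)) + ennreal \<gamma> * ennreal (?K - fv (stl \<omega>)) \<partial>T s)"
    unfolding Wr_nn[OF s] by (rule nn_integral_cong) (rule pw)
  also have "\<dots> = (\<integral>\<^sup>+\<omega>. ennreal (1 - indicator U (St 0 \<omega>)) \<partial>T s) + (\<integral>\<^sup>+\<omega>. ennreal \<gamma> * ennreal (?K - fv (stl \<omega>)) \<partial>T s)"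
    by (rule nn_integral_add[OF m1 m2'])
  also have "(\<integral>\<^sup>+\<omega>. ennreal (1 - indicator U (St 0 \<omega>)) \<partial>T s) = (\<integral>\<^sup>+\<omega>. ennreal (1 - indicator U s) \<partial>T s)"
    by (rule nn_integral_cong_AE) (use AE_St0[OF s] in auto)
  also have "\<dots> = ennreal (1 - indicator U s)" by (simp add: emeasure_space_1)
  also have "(\<integral>\<^sup>+\<omega>. ennreal \<gamma> * ennreal (?K - fv (stl \<omega>)) \<partial>T s) = ennreal \<gamma> * (\<integral>\<^sup>+\<omega>. ennreal (?K - fv (stl \<omega>)) \<partial>T s)"
    by (rule nn_integral_cmult) (use m2 in \<open>simp add: measurable_cong_sets[OF sets_T[OF s] refl]\<close>)
  also have "(\<integral>\<^sup>+\<omega>. ennreal (?K - fv (stl \<omega>)) \<partial>T s) = (\<integral>\<^sup>+\<omega>. ennreal (Wr (St 1 \<omega>)) \<partial>T s)"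
    by (rule nn_shift[OF s]) (simp_all add: Wr_nn)
  finally show ?thesis .
qed

end



context mdpU begin

definition psi :: "('s \<times> 'c) stream \<Rightarrow> real" where
  "psi \<omega> = (case hit_time U \<omega> of enat n \<Rightarrow> \<gamma> ^ n | \<infinity> \<Rightarrow> 0)"

lemma hit_meas[measurable]: "hit_time U \<in> M \<rightarrow>\<^sub>M count_space UNIV"
  unfolding hit_time_def by measurable

lemma psi_meas[measurable]: "psi \<in> borel_measurable M"
proof -
  have "(\<lambda>e. case e of enat n \<Rightarrow> \<gamma> ^ n | \<infinity> \<Rightarrow> 0) \<in> count_space UNIV \<rightarrow>\<^sub>M (borel :: real measure)"
    by simp
  from measurable_compose[OF hit_meas this] show ?thesis unfolding psi_def by simp
qed

lemma hitE_meas[measurable]: "(\<lambda>\<omega>. ennreal_of_enat (hit_time U \<omega>)) \<in> borel_measurable M"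
proof -
  have "(\<lambda>e. ennreal_of_enat e) \<in> count_space UNIV \<rightarrow>\<^sub>M (borel :: ennreal measure)"
    by simp
  from measurable_compose[OF hit_meas this] show ?thesis by simp
qed

lemma psi_bounds: "0 \<le> psi \<omega>" "psi \<omega> \<le> 1"
  unfolding psi_def using g0 g1
  by (auto split: enat.splits intro: power_le_one)

lemma psi_le_fv: "psi \<omega> \<le> fv \<omega>"
proof (cases "hit_time U \<omega>")
  case (enat n)
  then have ex: "\<exists>t. St t \<omega> \<in> U" and n: "n = (LEAST t. St t \<omega> \<in> U)"
    unfolding hit_time_def by (auto split: if_splits)
  have "St n \<omega> \<in> U" unfolding n by (rule LeastI_ex[OF ex])
  then have "\<gamma> ^ n \<le> fv \<omega>" unfolding fv_def
    by (intro geo_term[OF g0 g1]) (auto simp: indicator_def)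
  then show ?thesis using enat by (simp add: psi_def)
next
  case infinity
  then show ?thesis using fv_bounds by (simp add: psi_def)
qed

lemma psi_pw:
  fixes N :: nat
  shows "ennreal (\<gamma> ^ N) \<le> ennreal (psi \<omega>) + ennreal (\<gamma> ^ N / (N + 1)) * ennreal_of_enat (hit_time U \<omega>)"
proof (cases "hit_time U \<omega>")
  case (enat n)
  show ?thesis
  proof (cases "n \<le> N")
    case True
    then have "\<gamma> ^ N \<le> \<gamma> ^ n" using g0 g1 by (intro power_decreasing) auto
    then have "ennreal (\<gamma> ^ N) \<le> ennreal (psi \<omega>)" using enat by (simp add: psi_def ennreal_leI)
    then show ?thesis by (rule order_trans) simp
  next
    case False
    then have "real N + 1 \<le> real n" by simp
    then have "\<gamma> ^ N * ((real N + 1) / (real N + 1)) \<le> \<gamma> ^ N * (real n / (real N + 1))" using g0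
      by (intro mult_left_mono divide_right_mono) auto
    then have le: "\<gamma> ^ N \<le> \<gamma> ^ N / (N + 1) * real n" by (simp add: add.commute)
    have "ennreal (\<gamma> ^ N / (N + 1)) * ennreal_of_enat (hit_time U \<omega>) = ennreal (\<gamma> ^ N / (N + 1) * real n)"
      using enat g0 by (simp add: ennreal_of_nat_eq_real_of_nat) (subst ennreal_mult[symmetric], simp_all)
    moreover have "ennreal (\<gamma> ^ N) \<le> ennreal (\<gamma> ^ N / (N + 1) * real n)"
      using le by (rule ennreal_leI)
    ultimately show ?thesis by (metis add.commute add_increasing2 zero_le)
  qed
next
  case infinity
  have "ennreal (\<gamma> ^ N / (N + 1)) * ennreal_of_enat (hit_time U \<omega>) = \<top>"
    using infinity g0 by (simp add: ennreal_mult_top)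
  then show ?thesis by simp
qed

lemma psi_int_bound:
  assumes s: "s \<in> S" and H: "(\<integral>\<^sup>+\<omega>. ennreal_of_enat (hit_time U \<omega>) \<partial>T s) \<le> ennreal H"
  shows "\<gamma> ^ nat \<lceil>2 * max H 0\<rceil> / 2 \<le> (\<integral>\<omega>. psi \<omega> \<partial>T s)"
proof -
  interpret prob_space "T s" by (rule T_prob[OF s])
  define N where "N = nat \<lceil>2 * max H 0\<rceil>"
  define c where "c = \<gamma> ^ N / (N + 1)"
  have c0: "0 \<le> c" using g0 by (simp add: c_def)
  have pm: "psi \<in> borel_measurable (T s)" by (simp add: measurable_cong_sets[OF sets_T[OF s] refl])
  have hm: "(\<lambda>\<omega>. ennreal_of_enat (hit_time U \<omega>)) \<in> borel_measurable (T s)"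
    by (simp add: measurable_cong_sets[OF sets_T[OF s] refl])
  have ip: "integrable (T s) psi"
    by (rule integrable_const_bound[where B=1]) (use psi_bounds pm in auto)
  have "ennreal (\<gamma> ^ N) = (\<integral>\<^sup>+\<omega>. ennreal (\<gamma> ^ N) \<partial>T s)" by (simp add: emeasure_space_1)
  also have "\<dots> \<le> (\<integral>\<^sup>+\<omega>. ennreal (psi \<omega>) + ennreal c * ennreal_of_enat (hit_time U \<omega>) \<partial>T s)"
    by (rule nn_integral_mono) (use psi_pw in \<open>simp add: c_def\<close>)
  also have "\<dots> = (\<integral>\<^sup>+\<omega>. ennreal (psi \<omega>) \<partial>T s) + ennreal c * (\<integral>\<^sup>+\<omega>. ennreal_of_enat (hit_time U \<omega>) \<partial>T s)"
    using pm hm by (simp add: nn_integral_add nn_integral_cmult)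
  also have "\<dots> \<le> ennreal (\<integral>\<omega>. psi \<omega> \<partial>T s) + ennreal c * ennreal (max H 0)"
  proof (intro add_mono mult_left_mono)
    show "(\<integral>\<^sup>+\<omega>. ennreal (psi \<omega>) \<partial>T s) \<le> ennreal (\<integral>\<omega>. psi \<omega> \<partial>T s)"
      by (subst nn_integral_eq_integral[OF ip]) (use psi_bounds in auto)
    show "(\<integral>\<^sup>+\<omega>. ennreal_of_enat (hit_time U \<omega>) \<partial>T s) \<le> ennreal (max H 0)"
      using H by (rule order_trans) (simp add: ennreal_leI)
  qed simp
  also have "\<dots> = ennreal ((\<integral>\<omega>. psi \<omega> \<partial>T s) + c * max H 0)"
    using c0 psi_bounds by (simp add: ennreal_mult ennreal_plus integral_nonneg_AE)
  finally have "\<gamma> ^ N \<le> (\<integral>\<omega>. psi \<omega> \<partial>T s) + c * max H 0"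
    using c0 psi_bounds by (subst (asm) ennreal_le_iff) (auto intro!: add_nonneg_nonneg integral_nonneg_AE)
  moreover have "c * max H 0 \<le> \<gamma> ^ N / 2"
  proof -
    have "2 * max H 0 \<le> real N" unfolding N_def by linarith
    then have "max H 0 / (N + 1) \<le> 1 / 2" by (simp add: field_simps)
    then have "\<gamma> ^ N * (max H 0 / (N + 1)) \<le> \<gamma> ^ N * (1 / 2)" using g0
      by (intro mult_left_mono) auto
    then show ?thesis by (simp add: c_def)
  qed
  ultimately show ?thesis unfolding N_def[symmetric] by simp
qed

lemma Wr_upper:
  assumes s: "s \<in> S"
  shows "Wr s \<le> 1 / (1 - \<gamma>) - (\<integral>\<omega>. psi \<omega> \<partial>T s)"
proof -
  interpret prob_space "T s" by (rule T_prob[OF s])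
  have pm: "psi \<in> borel_measurable (T s)" by (simp add: measurable_cong_sets[OF sets_T[OF s] refl])
  have ip: "integrable (T s) psi"
    by (rule integrable_const_bound[where B=1]) (use psi_bounds pm in auto)
  have "Wr s \<le> (\<integral>\<omega>. 1 / (1 - \<gamma>) - psi \<omega> \<partial>T s)" unfolding Wr_def
    by (rule integral_mono[OF integrable_g[OF s]]) (use psi_le_fv ip in auto)
  also have "\<dots> = 1 / (1 - \<gamma>) - (\<integral>\<omega>. psi \<omega> \<partial>T s)"
    using ip by (simp add: prob_space)
  finally show ?thesis .
qed

end



theorem theorem1:
  fixes S :: "'s::euclidean_space set" and Act :: "'c::euclidean_space set"
    and P :: "'s \<times> 'c \<Rightarrow> 's measure" and \<mu> :: "'s measure"
    and \<pi> :: "'s \<Rightarrow> 'c measure" and T :: "'s \<Rightarrow> ('s \<times> 'c) stream measure"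
    and r :: "'s \<Rightarrow> 'c \<Rightarrow> 's \<Rightarrow> real" and \<gamma> :: real
    and I A B :: "'s set" and Hbar :: real
  assumes S_borel: "S \<in> sets borel" and Act_borel: "Act \<in> sets borel"
    and P_kernel: "P \<in> sspace S \<Otimes>\<^sub>M sspace Act \<rightarrow>\<^sub>M prob_algebra (sspace S)"
    and mu_prob: "\<mu> \<in> space (prob_algebra (sspace S))"
    and pi_kernel: "\<pi> \<in> sspace S \<rightarrow>\<^sub>M prob_algebra (sspace Act)"
    and traj: "is_traj_kernel S Act P \<pi> T"
    and gamma: "0 < \<gamma>" "\<gamma> < 1"
    and r_meas: "(\<lambda>(s, a, s'). r s a s') \<in> borel_measurable (sspace S \<Otimes>\<^sub>M sspace Act \<Otimes>\<^sub>M sspace S)"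
    and r_bounded: "\<exists>K. \<forall>s\<in>S. \<forall>a\<in>Act. \<forall>s'\<in>S. \<bar>r s a s'\<bar> \<le> K"
    and I_meas: "I \<in> sets (sspace S)" and A_meas: "A \<in> sets (sspace S)"
    and B_meas: "B \<in> sets (sspace S)"
    and U_meas: "B \<union> Abs S T (S - (A \<union> B)) \<in> sets (sspace S)"
    and I_absorbing: "absorbing T I" and mu_I: "measure \<mu> I = 1"
    and reach: "\<forall>s\<in>I. Prob T s (\<lambda>\<omega>. hit_time (B \<union> Abs S T (S - (A \<union> B))) \<omega> < \<infinity>) = 1"
    and Hbar_fin: "\<forall>s\<in>(A - B) \<inter> I.
        (\<integral>\<^sup>+\<omega>. ennreal_of_enat (hit_time (B \<union> Abs S T (S - (A \<union> B))) \<omega>) \<partial>T s) \<le> ennreal Hbar"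
    and reward: "\<forall>s\<in>S. \<forall>a\<in>Act. \<forall>s'\<in>S. r s a s' = indicator (B \<union> Abs S T (S - (A \<union> B))) s"
  shows "streett_supermartingale \<mu> T A B I (\<lambda>s. 1 / (1 - \<gamma>) - value_fun T \<gamma> r s)"
proof -
  define X where "X = S - (A \<union> B)"
  define U where "U = B \<union> Abs S T X"
  interpret mdpU S Act P \<pi> T \<gamma> U
    by unfold_locales (use P_kernel pi_kernel traj gamma U_meas in \<open>simp_all add: U_def X_def\<close>)
  let ?K = "1 / (1 - \<gamma>)"
  let ?W = "\<lambda>s. 1 / (1 - \<gamma>) - value_fun T \<gamma> r s"
  have S_sets: "S \<in> sets (sspace S)"
    by (metis space_sspace sets.top)
  have X_meas[measurable]: "X \<in> sets (sspace S)" unfolding X_def using S_sets A_meas B_meas by auto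
  have Abs_X: "Abs S T X \<subseteq> X" using Abs_sub[OF X_meas] by auto
  have AbsU: "Abs S T X = U - B" unfolding U_def using Abs_X by (auto simp: X_def)
  have Abs_meas[measurable]: "Abs S T X \<in> sets (sspace S)"
    unfolding AbsU using U_meas B_meas by auto
  have IS: "I \<subseteq> S" using sets.sets_into_space[OF I_meas] by simp
  have W_eq: "?W s = Wr s" if s: "s \<in> S" for s
  proof -
    interpret prob_space "T s" by (rule T_prob[OF s])
    have fm: "fv \<in> borel_measurable (T s)" by (simp add: measurable_cong_sets[OF sets_T[OF s] refl])
    have ifv: "integrable (T s) fv"
      by (rule integrable_const_bound[where B="?K"]) (use fv_bounds fm in auto)
    have "value_fun T \<gamma> r s = (\<integral>\<omega>. fv \<omega> \<partial>T s)"
      unfolding value_fun_def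
    proof (rule Bochner_Integration.integral_cong[OF refl])
      fix \<omega> assume "\<omega> \<in> space (T s)"
      then have \<omega>: "\<omega> \<in> space M" using space_T[OF s] by simp
      show "(\<Sum>t. \<gamma> ^ t * r (St t \<omega>) (At t \<omega>) (St (Suc t) \<omega>)) = fv \<omega>"
        unfolding fv_def using reward St_in[OF \<omega>] At_in[OF \<omega>] by (simp add: U_def X_def)
    qed
    moreover have "Wr s = ?K - (\<integral>\<omega>. fv \<omega> \<partial>T s)"
      unfolding Wr_def using ifv by (simp add: prob_space)
    ultimately show ?thesis by simp
  qed
  define Q where "Q s = (\<integral>\<^sup>+\<omega>. ennreal (?W (St 1 \<omega>)) \<partial>T s)" for s
  have Q_eq: "Q s = (\<integral>\<^sup>+\<omega>. ennreal (Wr (St 1 \<omega>)) \<partial>T s)" if s: "s \<in> S" for s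
    unfolding Q_def
    by (rule nn_integral_cong) (simp add: W_eq St_in space_T[OF s])
  have Q_le: "Q s \<le> ennreal ?K" if s: "s \<in> S" for s
  proof -
    interpret prob_space "T s" by (rule T_prob[OF s])
    have "Q s \<le> (\<integral>\<^sup>+\<omega>. ennreal ?K \<partial>T s)"
      unfolding Q_eq[OF s]
      by (rule nn_integral_mono) (use Wr_bounds St_in space_T[OF s] in \<open>auto intro: ennreal_leI\<close>)
    then show ?thesis by (simp add: emeasure_space_1)
  qed
  have notU: "\<exists>q. Q s = ennreal q \<and> 0 \<le> q \<and> q \<le> ?K \<and> Wr s = 1 + \<gamma> * q"
    if s: "s \<in> S" and sU: "s \<notin> U" for s
  proof -
    have fin: "Q s \<noteq> \<top>" using Q_le[OF s] by (auto simp: top_unique)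
    define q where "q = enn2real (Q s)"
    have Qq: "Q s = ennreal q" unfolding q_def using fin by (metis ennreal_enn2real less_top)
    have q0: "0 \<le> q" unfolding q_def by simp
    have qK: "q \<le> ?K" using Q_le[OF s] Qq gamma by (simp add: ennreal_le_iff)
    have "ennreal (Wr s) = ennreal 1 + ennreal \<gamma> * ennreal q"
      using Wr_rec[OF s] sU Q_eq[OF s] Qq by simp
    also have "\<dots> = ennreal (1 + \<gamma> * q)"
      using gamma q0 by (simp add: ennreal_mult ennreal_plus)
    finally have "Wr s = 1 + \<gamma> * q"
      using Wr_bounds[OF s] gamma q0 by (subst (asm) ennreal_inj) auto
    then show ?thesis using Qq q0 qK by blast
  qed
  define N where "N = nat \<lceil>2 * max Hbar 0\<rceil>"
  define c where "c = \<gamma> ^ N / 2"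
  define \<epsilon> where "\<epsilon> = (1 - \<gamma>) * c / \<gamma>"
  have c0: "0 < c" using gamma by (simp add: c_def)
  have eps0: "0 < \<epsilon>" using gamma c0 by (simp add: \<epsilon>_def)
  have part4: "\<forall>s\<in>(A - B) \<inter> I. Q s + ennreal \<epsilon> \<le> ennreal (?W s)"
  proof
    fix s assume sI: "s \<in> (A - B) \<inter> I"
    then have s: "s \<in> S" using IS by auto
    have sU: "s \<notin> U" using sI Abs_X by (auto simp: U_def X_def)
    obtain q where Qq: "Q s = ennreal q" and q0: "0 \<le> q" and qK: "q \<le> ?K" and Wq: "Wr s = 1 + \<gamma> * q"
      using notU[OF s sU] by blast
    have "c \<le> (\<integral>\<omega>. psi \<omega> \<partial>T s)"
      unfolding c_def N_def
      by (rule psi_int_bound[OF s]) (use Hbar_fin sI in \<open>simp add: U_def X_def\<close>)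
    then have Wc: "Wr s \<le> ?K - c" using Wr_upper[OF s] by simp
    have "(1 - \<gamma>) * Wr s \<le> (1 - \<gamma>) * (?K - c)"
      using Wc gamma by (intro mult_left_mono) auto
    also have "\<dots> = 1 - (1 - \<gamma>) * c" using gamma by (simp add: field_simps)
    finally have h: "(1 - \<gamma>) * (1 + \<gamma> * q) \<le> 1 - (1 - \<gamma>) * c" unfolding Wq .
    have e1: "\<gamma> * \<epsilon> = (1 - \<gamma>) * c" using gamma by (simp add: \<epsilon>_def)
    have e2: "(1 - \<gamma>) * (1 + \<gamma> * q) = (1 - \<gamma>) + \<gamma> * ((1 - \<gamma>) * q)" by (simp add: algebra_simps)
    have "\<gamma> * ((1 - \<gamma>) * q + \<epsilon>) = \<gamma> * ((1 - \<gamma>) * q) + (1 - \<gamma>) * c"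
      using e1 by (simp add: distrib_left)
    then have "\<gamma> * ((1 - \<gamma>) * q + \<epsilon>) \<le> \<gamma> * 1" using h e2 by linarith
    then have "(1 - \<gamma>) * q + \<epsilon> \<le> 1" using gamma by simp
    then have le: "q + \<epsilon> \<le> Wr s" unfolding Wq by (simp add: algebra_simps)
    have "Q s + ennreal \<epsilon> = ennreal (q + \<epsilon>)" using Qq q0 eps0 by (simp add: ennreal_plus)
    also have "\<dots> \<le> ennreal (Wr s)" using le by (rule ennreal_leI)
    finally show "Q s + ennreal \<epsilon> \<le> ennreal (?W s)" using W_eq[OF s] by simp
  qed
  have part5: "\<forall>s\<in>I - (A \<union> B). Q s \<le> ennreal (?W s)"
  proof
    fix s assume sI: "s \<in> I - (A \<union> B)"
    then have s: "s \<in> S" using IS by auto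
    show "Q s \<le> ennreal (?W s)"
    proof (cases "s \<in> U")
      case False
      obtain q where Qq: "Q s = ennreal q" and q0: "0 \<le> q" and qK: "q \<le> ?K" and Wq: "Wr s = 1 + \<gamma> * q"
        using notU[OF s False] by blast
      have "(1 - \<gamma>) * q \<le> (1 - \<gamma>) * ?K" using qK gamma by (intro mult_left_mono) auto
      then have "(1 - \<gamma>) * q \<le> 1" using gamma by simp
      then have "q \<le> Wr s" unfolding Wq by (simp add: algebra_simps)
      then show ?thesis using Qq W_eq[OF s] by (simp add: ennreal_leI)
    next
      case True
      then have sA: "s \<in> Abs S T X" using sI by (simp add: U_def)
      interpret prob_space "T s" by (rule T_prob[OF s])
      have "AE \<omega> in T s. \<forall>t. St t \<omega> \<in> Abs S T X"
        unfolding AE_all_countable using Abs_closed[OF X_meas Abs_meas sA] by blast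
      then have "AE \<omega> in T s. fv \<omega> = ?K"
      proof (rule AE_mono_sp)
        fix \<omega> :: "('s \<times> 'c) stream" assume "\<forall>t. St t \<omega> \<in> Abs S T X"
        then have "\<forall>t. St t \<omega> \<in> U" by (auto simp: U_def)
        then show "fv \<omega> = ?K" unfolding fv_def using geo_all[OF gamma] by simp
      qed
      then have "ennreal (Wr s) = 0"
        unfolding Wr_nn[OF s] by (subst nn_integral_cong_AE[where v="\<lambda>_. 0"]) (auto elim: AE_mp)
      then have "ennreal \<gamma> * Q s = 0" using Wr_rec[OF s] True Q_eq[OF s] by simp
      then have "Q s = 0" using gamma by simp
      then show ?thesis by simp
    qed
  qed
  show ?thesis
    unfolding streett_supermartingale_def
  proof (intro conjI)
    show "\<forall>s\<in>I. 0 \<le> ?W s"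
    proof
      fix s assume "s \<in> I"
      then have s: "s \<in> S" using IS by auto
      show "0 \<le> ?W s" using W_eq[OF s] Wr_bounds(1)[OF s] by simp
    qed
    show "measure \<mu> I = 1" by (rule mu_I)
    show "\<forall>s\<in>I. Prob T s (\<lambda>\<omega>. St 1 \<omega> \<in> I) = 1" using I_absorbing by (simp add: absorbing_def)
    show "\<exists>\<epsilon>>0. \<forall>s\<in>(A - B) \<inter> I. (\<integral>\<^sup>+\<omega>. ennreal (?W (St 1 \<omega>)) \<partial>T s) + ennreal \<epsilon> \<le> ennreal (?W s)"
      using part4 eps0 unfolding Q_def by blast
    show "\<forall>s\<in>I - (A \<union> B). (\<integral>\<^sup>+\<omega>. ennreal (?W (St 1 \<omega>)) \<partial>T s) \<le> ennreal (?W s)"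
      using part5 unfolding Q_def by blast
  qed
qed



end
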